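(* Let $\Phi=\forall u_1\ldots\forall u_n\exists e_1(D_1)\ldots\exists e_m(D_m).\varphi$ be a DQBF with prefix $\mathcal{Q}$, let $A$ be a set of arbiter variables with arbiter clauses $\varphi_A$, and let $C_1,\ldots,C_k$ be clauses such that for each $i$, $C_i$ is a forcing clause in $\varphi\wedge\varphi_A\wedge\bigwedge_{1\le j<i}C_j$. Then the DQBF $\mathcal{Q}\exists A(\emptyset).\varphi\wedge\varphi_A\wedge\bigwedge_{1\le i\le k}C_i$ is true if and only if $\Phi$ is true.
   Context: For a set $V$ of variables, $[V]$ is the set of assignments $V\to\{\textsc{true},\textsc{false}\}$; assignments are identified with terms of the literals they make true, $\neg\sigma$ is the clause of the negations of these literals, and $\sigma|_W$ denotes restriction to (the part of the domain lying in) $W$. A DQBF is $\forall u_1\ldots\forall u_n\exists e_1(D_1)\ldots\exists e_m(D_m).\varphi$ with pairwise distinct variables, $U=\{u_i\}$, $E=\{e_j\}$, dependency sets $D(e_j)=D_j\subseteq U$, and $\varphi$ a CNF over $U\cup E$; a model is a family $F=(F_e)_{e}$ with $F_e:[D(e)]\to\{\textsc{true},\textsc{false}\}$ such that for every $\sigma\in[U]$, $\sigma\cup F(\sigma)$ satisfies the matrix, where $F(\sigma)$ assigns each existential $e$ the value $F_e(\sigma|_{D(e)})$; the DQBF is true iff it has a model. Arbiter variables: for $e\in E$, $\sigma\in[D(e)]$, $e^\sigma$ is a fresh variable; for a set $A$ of them, $\varphi_A=\bigwedge_{e^\sigma\in A}\big((e^\sigma\vee\neg\sigma\vee\neg e)\wedge(\neg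 e^\sigma\vee\neg\sigma\vee e)\big)$. For a CNF $\psi$, $\mathcal{Q}\exists A(\emptyset).\psi$ is the DQBF whose prefix is that of $\Phi$ extended by every variable of $A$ as an existential variable with empty dependency set, and whose matrix is $\psi$. Forcing: let $\ell$ be a literal on a variable in $E$, $\psi$ a formula with $\mathit{var}(\psi)\subseteq U\cup E\cup A$, and $\sigma$ a partial assignment to $U\cup A$; $\ell$ is forced by $\sigma$ in $\psi$ if $\psi\wedge\sigma\wedge\neg\ell$ is unsatisfiable, and in that case $\neg(\sigma|_{D(\mathit{var}(\ell))\cup A})\vee\ell$ is called a forcing clause in $\psi$. *)

theory Defs
  imports Main
begin

type_synonym 'x lit = "'x \<times> bool"          \<comment> \<open>(variable, polarity); (x,True) = x, (x,False) = not x\<close>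
type_synonym 'x clause = "'x lit set"
type_synonym 'x cnf = "'x clause set"
type_synonym 'x passign = "'x \<rightharpoonup> bool"

definition sat_clause :: "('x \<Rightarrow> bool) \<Rightarrow> 'x clause \<Rightarrow> bool" where
  "sat_clause \<alpha> C \<longleftrightarrow> (\<exists>(x,b)\<in>C. \<alpha> x = b)"

definition sat_cnf :: "('x \<Rightarrow> bool) \<Rightarrow> 'x cnf \<Rightarrow> bool" where
  "sat_cnf \<alpha> \<phi> \<longleftrightarrow> (\<forall>C\<in>\<phi>. sat_clause \<alpha> C)"

definition vars_cnf :: "'x cnf \<Rightarrow> 'x set" where
  "vars_cnf \<phi> = fst ` \<Union>\<phi>"

definition is_cnf :: "'x cnf \<Rightarrow> bool" where
  "is_cnf \<phi> \<longleftrightarrow> finite \<phi> \<and> (\<forall>C\<in>\<phi>. finite C)"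

definition assignments :: "'x set \<Rightarrow> 'x passign set" where
  "assignments W = {\<sigma>. dom \<sigma> = W}"

definition sat_term :: "('x \<Rightarrow> bool) \<Rightarrow> 'x passign \<Rightarrow> bool" where
  "sat_term \<alpha> \<sigma> \<longleftrightarrow> (\<forall>x b. \<sigma> x = Some b \<longrightarrow> \<alpha> x = b)"

definition neg_clause :: "'x passign \<Rightarrow> 'x clause" where
  "neg_clause \<sigma> = {(x, \<not> b) | x b. \<sigma> x = Some b}"

text \<open>Prefix: universal variables, existential variables, dependency sets; and a CNF matrix.
  (The semantics of a DQBF does not depend on the order of the quantifiers in the prefix.)\<close>
datatype 'x dqbf = DQBF (univs: "'x set") (exs: "'x set") (deps: "'x \<Rightarrow> 'x set") (matrix: "'x cnf")

definition wf_dqbf :: "'x dqbf \<Rightarrow> bool" where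
  "wf_dqbf \<Phi> \<longleftrightarrow> finite (univs \<Phi>) \<and> finite (exs \<Phi>) \<and> univs \<Phi> \<inter> exs \<Phi> = {}
     \<and> (\<forall>e\<in>exs \<Phi>. deps \<Phi> e \<subseteq> univs \<Phi>)
     \<and> is_cnf (matrix \<Phi>) \<and> vars_cnf (matrix \<Phi>) \<subseteq> univs \<Phi> \<union> exs \<Phi>"

text \<open>sigma \<union> F(sigma), as a total assignment (variables outside U \<union> E get an arbitrary value).\<close>
definition extend :: "'x dqbf \<Rightarrow> ('x \<Rightarrow> 'x passign \<Rightarrow> bool) \<Rightarrow> 'x passign \<Rightarrow> 'x \<Rightarrow> bool" where
  "extend \<Phi> F \<sigma> x =
     (if x \<in> univs \<Phi> then the (\<sigma> x)
      else if x \<in> exs \<Phi> then F x (\<sigma> |` deps \<Phi> x) else False)"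

text \<open>A model: for each existential e a function F_e : [D(e)] \<rightarrow> bool (only its values on [D(e)] matter).\<close>
definition is_model :: "'x dqbf \<Rightarrow> ('x \<Rightarrow> 'x passign \<Rightarrow> bool) \<Rightarrow> bool" where
  "is_model \<Phi> F \<longleftrightarrow> (\<forall>\<sigma>\<in>assignments (univs \<Phi>). sat_cnf (extend \<Phi> F \<sigma>) (matrix \<Phi>))"

definition dqbf_true :: "'x dqbf \<Rightarrow> bool" where
  "dqbf_true \<Phi> \<longleftrightarrow> (\<exists>F. is_model \<Phi> F)"

text \<open>Variables of the extended formula: original variables, and fresh arbiter variables e^sigma.\<close>
datatype 'v avar = V 'v | Arb 'v "'v passign"

definition lift_cnf :: "'v cnf \<Rightarrow> 'v avar cnf" where
  "lift_cnf \<phi> = (\<lambda>C. (\<lambda>(x,b). (V x, b)) ` C) ` \<phi>"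

definition lift_assign :: "'v passign \<Rightarrow> 'v avar passign" where
  "lift_assign \<sigma> y = (case y of V x \<Rightarrow> \<sigma> x | Arb _ _ \<Rightarrow> None)"

definition arbiter_vars :: "'v dqbf \<Rightarrow> 'v avar set" where
  "arbiter_vars \<Phi> = {Arb e \<sigma> | e \<sigma>. e \<in> exs \<Phi> \<and> \<sigma> \<in> assignments (deps \<Phi> e)}"

definition arbiter_clauses :: "'v avar set \<Rightarrow> 'v avar cnf" where
  "arbiter_clauses A =
     (\<Union>a\<in>A. case a of
        Arb e \<sigma> \<Rightarrow> {insert (Arb e \<sigma>, True) (insert (V e, False) (neg_clause (lift_assign \<sigma>))),
                    insert (Arb e \<sigma>, False) (insert (V e, True) (neg_clause (lift_assign \<sigma>)))}
      | V _ \<Rightarrow> {})"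

definition extend_prefix :: "'v dqbf \<Rightarrow> 'v avar set \<Rightarrow> 'v avar cnf \<Rightarrow> 'v avar dqbf" where
  "extend_prefix \<Phi> A \<psi> =
     DQBF (V ` univs \<Phi>) (V ` exs \<Phi> \<union> A)
          (\<lambda>y. case y of V x \<Rightarrow> V ` deps \<Phi> x | Arb _ _ \<Rightarrow> {}) \<psi>"

definition forced :: "'x cnf \<Rightarrow> 'x passign \<Rightarrow> 'x lit \<Rightarrow> bool" where
  "forced \<psi> \<sigma> l \<longleftrightarrow> \<not> (\<exists>\<alpha>. sat_cnf \<alpha> \<psi> \<and> sat_term \<alpha> \<sigma> \<and> \<alpha> (fst l) \<noteq> snd l)"

definition forcing_clause :: "'v dqbf \<Rightarrow> 'v avar set \<Rightarrow> 'v avar cnf \<Rightarrow> 'v avar clause \<Rightarrow> bool" where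
  "forcing_clause \<Phi> A \<psi> C \<longleftrightarrow>
     vars_cnf \<psi> \<subseteq> V ` univs \<Phi> \<union> V ` exs \<Phi> \<union> A \<and>
     (\<exists>e b \<sigma>. e \<in> exs \<Phi> \<and> dom \<sigma> \<subseteq> V ` univs \<Phi> \<union> A \<and>
        forced \<psi> \<sigma> (V e, b) \<and>
        C = insert (V e, b) (neg_clause (\<sigma> |` (V ` deps \<Phi> e \<union> A))))"

end

theory Submission
  imports Defs
begin

lemma sat_clause_insert_neg:
  "sat_clause \<alpha> (insert l (neg_clause \<rho>)) \<longleftrightarrow> (\<alpha> (fst l) = snd l \<or> \<not> sat_term \<alpha> \<rho>)"
  by (cases l) (auto simp: sat_clause_def neg_clause_def sat_term_def)

lemma sat_lift_clause: "sat_clause \<alpha> ((\<lambda>(x,b). (V x, b)) ` C) \<longleftrightarrow> sat_clause (\<alpha> \<circ> V) C"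
  unfolding sat_clause_def by (simp add: case_prod_beta)

lemma sat_lift: "sat_cnf \<alpha> (lift_cnf \<phi>) \<longleftrightarrow> sat_cnf (\<alpha> \<circ> V) \<phi>"
  unfolding sat_cnf_def lift_cnf_def by (simp add: sat_lift_clause)

lemma sat_cnf_cong:
  assumes "\<forall>x \<in> vars_cnf \<phi>. \<alpha> x = \<beta> x"
  shows "sat_cnf \<alpha> \<phi> \<longleftrightarrow> sat_cnf \<beta> \<phi>"
proof -
  have h: "\<And>C x b. C \<in> \<phi> \<Longrightarrow> (x,b) \<in> C \<Longrightarrow> \<alpha> x = \<beta> x"
    using assms unfolding vars_cnf_def by force
  have "sat_clause \<alpha> C = sat_clause \<beta> C" if "C \<in> \<phi>" for C
    unfolding sat_clause_def using h[OF that] by auto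
  then show ?thesis unfolding sat_cnf_def by blast
qed

lemma ext_P: "extend (extend_prefix \<Phi> A \<psi>) G \<tau> y =
  (if y \<in> V ` univs \<Phi> then the (\<tau> y) else if y \<in> V ` exs \<Phi> \<union> A then
     G y (\<tau> |` (case y of V x \<Rightarrow> V ` deps \<Phi> x | Arb _ _ \<Rightarrow> {})) else False)"
  by (simp add: extend_def extend_prefix_def)

lemma restr_V: "(\<lambda>z. (\<tau> |` (V ` S)) (V z)) = (\<lambda>z. \<tau> (V z)) |` S"
  by (auto simp: restrict_map_def fun_eq_iff)

lemma lift_restr: "lift_assign (\<sigma> |` S) = lift_assign \<sigma> |` (V ` S)"
  by (auto simp: restrict_map_def fun_eq_iff lift_assign_def split: avar.splits)

lemma sat_clause_ins: "sat_clause \<alpha> (insert l X) = (\<alpha> (fst l) = snd l \<or> sat_clause \<alpha> X)"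
  by (cases l) (simp add: sat_clause_def)

lemma dom_lift: "dom (lift_assign \<sigma>) = V ` dom \<sigma>"
proof (rule set_eqI)
  fix y show "y \<in> dom (lift_assign \<sigma>) \<longleftrightarrow> y \<in> V ` dom \<sigma>"
    by (cases y) (auto simp: lift_assign_def)
qed

theorem corollary3:
  fixes \<Phi> :: "'v dqbf" and A :: "'v avar set" and Cs :: "'v avar clause list"
  assumes "wf_dqbf \<Phi>"
    and "A \<subseteq> arbiter_vars \<Phi>"
    and "\<forall>i < length Cs. forcing_clause \<Phi> A
           (lift_cnf (matrix \<Phi>) \<union> arbiter_clauses A \<union> set (take i Cs)) (Cs ! i)"
  shows "dqbf_true (extend_prefix \<Phi> A (lift_cnf (matrix \<Phi>) \<union> arbiter_clauses A \<union> set Cs))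
           \<longleftrightarrow> dqbf_true \<Phi>"
proof
  assume "dqbf_true (extend_prefix \<Phi> A (lift_cnf (matrix \<Phi>) \<union> arbiter_clauses A \<union> set Cs))"
  then obtain G where G: "is_model (extend_prefix \<Phi> A (lift_cnf (matrix \<Phi>) \<union> arbiter_clauses A \<union> set Cs)) G"
    unfolding dqbf_true_def by blast
  define F where "F = (\<lambda>x \<rho>. G (V x) (lift_assign \<rho>))"
  have "is_model \<Phi> F" unfolding is_model_def
  proof
    fix \<sigma> assume s: "\<sigma> \<in> assignments (univs \<Phi>)"
    have "lift_assign \<sigma> \<in> assignments (V ` univs \<Phi>)"
      using s by (simp add: assignments_def dom_lift)
    then have "sat_cnf (extend (extend_prefix \<Phi> A (lift_cnf (matrix \<Phi>) \<union> arbiter_clauses A \<union> set Cs)) G (lift_assign \<sigma>))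
       (lift_cnf (matrix \<Phi>))"
      using G unfolding is_model_def by (auto simp: extend_prefix_def sat_cnf_def)
    then have "sat_cnf (extend (extend_prefix \<Phi> A (lift_cnf (matrix \<Phi>) \<union> arbiter_clauses A \<union> set Cs)) G (lift_assign \<sigma>) \<circ> V)
       (matrix \<Phi>)" by (simp add: sat_lift)
    moreover have "\<forall>x \<in> vars_cnf (matrix \<Phi>). (extend (extend_prefix \<Phi> A (lift_cnf (matrix \<Phi>) \<union> arbiter_clauses A \<union> set Cs)) G (lift_assign \<sigma>) \<circ> V) x
       = extend \<Phi> F \<sigma> x"
    proof
      fix x assume "x \<in> vars_cnf (matrix \<Phi>)"
      then have "x \<in> univs \<Phi> \<union> exs \<Phi>" using assms(1) unfolding wf_dqbf_def by blast
      then show "(extend (extend_prefix \<Phi> A (lift_cnf (matrix \<Phi>) \<union> arbiter_clauses A \<union> set Cs)) G (lift_assign \<sigma>) \<circ> V) x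
       = extend \<Phi> F \<sigma> x"
        unfolding ext_P o_def
        by (auto simp: extend_def F_def lift_restr lift_assign_def)
    qed
    ultimately show "sat_cnf (extend \<Phi> F \<sigma>) (matrix \<Phi>)" using sat_cnf_cong by blast
  qed
  then show "dqbf_true \<Phi>" unfolding dqbf_true_def by blast
next
  assume "dqbf_true \<Phi>"
  then obtain F where F: "is_model \<Phi> F" unfolding dqbf_true_def by blast
  define G where "G = (\<lambda>y \<rho>. case y of V x \<Rightarrow> F x (\<lambda>z. \<rho> (V z)) | Arb e \<sigma> \<Rightarrow> F e \<sigma>)"
  define \<psi>0 where "\<psi>0 = lift_cnf (matrix \<Phi>) \<union> arbiter_clauses A"
  define ext where "ext = extend (extend_prefix \<Phi> A (\<psi>0 \<union> set Cs)) G"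
  have ext: "ext \<tau> y =
    (if y \<in> V ` univs \<Phi> then the (\<tau> y) else if y \<in> V ` exs \<Phi> \<union> A then
     G y (\<tau> |` (case y of V x \<Rightarrow> V ` deps \<Phi> x | Arb _ _ \<Rightarrow> {})) else False)" for \<tau> y
    unfolding ext_def by (rule ext_P)
  have UE: "univs \<Phi> \<inter> exs \<Phi> = {}" using assms(1) unfolding wf_dqbf_def by blast
  have AA: "y \<in> A \<Longrightarrow> y \<notin> V ` X" for y X using assms(2) unfolding arbiter_vars_def by auto
  have base: "sat_cnf (ext \<tau>) \<psi>0" if t: "\<tau> \<in> assignments (V ` univs \<Phi>)" for \<tau>
  proof -
    define \<sigma>0 where "\<sigma>0 = (\<lambda>z. \<tau> (V z))"
    have s0: "\<sigma>0 \<in> assignments (univs \<Phi>)"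
      using t by (auto simp: assignments_def \<sigma>0_def)
    have eqE: "ext \<tau> (V x) = extend \<Phi> F \<sigma>0 x" if "x \<in> univs \<Phi> \<union> exs \<Phi>" for x
      using that UE unfolding ext by (auto simp: extend_def G_def \<sigma>0_def restr_V)
    have "sat_cnf (extend \<Phi> F \<sigma>0) (matrix \<Phi>)" using F s0 unfolding is_model_def by blast
    moreover have "\<forall>x \<in> vars_cnf (matrix \<Phi>). (ext \<tau> \<circ> V) x = extend \<Phi> F \<sigma>0 x"
      using eqE assms(1) unfolding wf_dqbf_def by auto
    ultimately have L: "sat_cnf (ext \<tau>) (lift_cnf (matrix \<Phi>))"
      using sat_cnf_cong sat_lift by metis
    have R: "sat_cnf (ext \<tau>) (arbiter_clauses A)"
      unfolding sat_cnf_def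
    proof
      fix C assume "C \<in> arbiter_clauses A"
      then obtain a where aA: "a \<in> A" and Ca: "C \<in> (case a of
        Arb e \<sigma> \<Rightarrow> {insert (Arb e \<sigma>, True) (insert (V e, False) (neg_clause (lift_assign \<sigma>))),
                    insert (Arb e \<sigma>, False) (insert (V e, True) (neg_clause (lift_assign \<sigma>)))}
      | V _ \<Rightarrow> {})" unfolding arbiter_clauses_def by blast
      then obtain e \<sigma> where a: "Arb e \<sigma> \<in> A" and
        C: "C = insert (Arb e \<sigma>, True) (insert (V e, False) (neg_clause (lift_assign \<sigma>))) \<or>
            C = insert (Arb e \<sigma>, False) (insert (V e, True) (neg_clause (lift_assign \<sigma>)))"
        by (cases a) auto
      have e: "e \<in> exs \<Phi>" and sd: "\<sigma> \<in> assignments (deps \<Phi> e)"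
        using a assms(2) unfolding arbiter_vars_def by auto
      have va: "ext \<tau> (Arb e \<sigma>) = F e \<sigma>" using a unfolding ext by (auto simp: G_def)
      have "sat_term (ext \<tau>) (lift_assign \<sigma>) \<Longrightarrow> ext \<tau> (V e) = F e \<sigma>"
      proof -
        assume st: "sat_term (ext \<tau>) (lift_assign \<sigma>)"
        have "\<sigma>0 |` deps \<Phi> e = \<sigma>"
        proof
          fix x show "(\<sigma>0 |` deps \<Phi> e) x = \<sigma> x"
          proof (cases "x \<in> deps \<Phi> e")
            case True
            then have xu: "x \<in> univs \<Phi>" using e assms(1) unfolding wf_dqbf_def by blast
            from True sd obtain c where c: "\<sigma> x = Some c" unfolding assignments_def by auto
            then have "ext \<tau> (V x) = c" using st unfolding sat_term_def lift_assign_def by auto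
            then have "the (\<tau> (V x)) = c" using xu unfolding ext by auto
            moreover have "\<tau> (V x) \<noteq> None" using t xu unfolding assignments_def by auto
            ultimately show ?thesis using True c by (auto simp: \<sigma>0_def)
          next
            case False
            have "x \<notin> dom \<sigma>" using False sd unfolding assignments_def by simp
            then show ?thesis using False by (simp add: domIff)
          qed
        qed
        then show ?thesis using eqE[of e] e UE by (auto simp: extend_def)
      qed
      then have H: "sat_clause (ext \<tau>) (insert (V e, b) (neg_clause (lift_assign \<sigma>))) \<or> ext \<tau> (V e) = F e \<sigma>" for b
      proof -
        assume imp: "sat_term (ext \<tau>) (lift_assign \<sigma>) \<Longrightarrow> ext \<tau> (V e) = F e \<sigma>"
        show ?thesis
        proof (cases "sat_term (ext \<tau>) (lift_assign \<sigma>)")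
          case True then show ?thesis using imp by simp
        next
          case False then show ?thesis unfolding sat_clause_insert_neg by blast
        qed
      qed
      have I: "\<And>l X. sat_clause (ext \<tau>) (insert l X) = (ext \<tau> (fst l) = snd l \<or> sat_clause (ext \<tau>) X)"
        using sat_clause_ins by blast
      from C show "sat_clause (ext \<tau>) C"
      proof
        assume "C = insert (Arb e \<sigma>, True) (insert (V e, False) (neg_clause (lift_assign \<sigma>)))"
        then show ?thesis using H[of False] va by (cases "F e \<sigma>") (auto simp: I)
      next
        assume "C = insert (Arb e \<sigma>, False) (insert (V e, True) (neg_clause (lift_assign \<sigma>)))"
        then show ?thesis using H[of True] va by (cases "F e \<sigma>") (auto simp: I)
      qed
    qed
    show ?thesis using L R unfolding \<psi>0_def sat_cnf_def by blast
  qed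
  have "\<forall>\<tau> \<in> assignments (V ` univs \<Phi>). sat_cnf (ext \<tau>) (\<psi>0 \<union> set (take i Cs))" if "i \<le> length Cs" for i
    using that
  proof (induction i)
    case 0
    then show ?case using base by simp
  next
    case (Suc i)
    then have IH: "\<forall>\<tau> \<in> assignments (V ` univs \<Phi>). sat_cnf (ext \<tau>) (\<psi>0 \<union> set (take i Cs))"
      and il: "i < length Cs" by auto
    have fc: "forcing_clause \<Phi> A (\<psi>0 \<union> set (take i Cs)) (Cs ! i)" using assms(3) il
      unfolding \<psi>0_def by auto
    then obtain e b \<sigma> where e: "e \<in> exs \<Phi>" and ds: "dom \<sigma> \<subseteq> V ` univs \<Phi> \<union> A"
      and fo: "forced (\<psi>0 \<union> set (take i Cs)) \<sigma> (V e, b)"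
      and C: "Cs ! i = insert (V e, b) (neg_clause (\<sigma> |` (V ` deps \<Phi> e \<union> A)))"
      unfolding forcing_clause_def by blast
    have new: "sat_clause (ext \<tau>) (Cs ! i)" if t: "\<tau> \<in> assignments (V ` univs \<Phi>)" for \<tau>
    proof -
      have "ext \<tau> (V e) = b" if ST: "sat_term (ext \<tau>) (\<sigma> |` (V ` deps \<Phi> e \<union> A))"
      proof -
        define \<tau>' where "\<tau>' = (\<lambda>y. if y \<in> V ` univs \<Phi> \<and> y \<in> dom \<sigma> then \<sigma> y else \<tau> y)"
        have dt: "\<And>y. (\<tau> y \<noteq> None) = (y \<in> V ` univs \<Phi>)" using t unfolding assignments_def by auto
        have "dom \<tau>' = V ` univs \<Phi>"
        proof (rule set_eqI)
          fix y show "y \<in> dom \<tau>' \<longleftrightarrow> y \<in> V ` univs \<Phi>"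
            using dt[of y] unfolding \<tau>'_def by (cases "y \<in> V ` univs \<Phi> \<and> y \<in> dom \<sigma>") auto
        qed
        then have t': "\<tau>' \<in> assignments (V ` univs \<Phi>)" unfolding assignments_def by simp
        have s1: "sat_cnf (ext \<tau>') (\<psi>0 \<union> set (take i Cs))" using IH t' by blast
        have s2: "sat_term (ext \<tau>') \<sigma>"
          unfolding sat_term_def
        proof (intro allI impI)
          fix y c assume yc: "\<sigma> y = Some c"
          then have "y \<in> V ` univs \<Phi> \<union> A" using ds by auto
          then show "ext \<tau>' y = c"
          proof
            assume "y \<in> V ` univs \<Phi>"
            then show ?thesis using yc unfolding ext \<tau>'_def by auto
          next
            assume yA: "y \<in> A"
            then have "ext \<tau> y = c" using ST yc unfolding sat_term_def by auto
            moreover have "ext \<tau>' y = ext \<tau> y" using yA AA[OF yA] unfolding ext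
              by (auto split: avar.splits)
            ultimately show ?thesis by simp
          qed
        qed
        have "ext \<tau>' (V e) = b" using fo s1 s2 unfolding forced_def by auto
        moreover have "\<tau>' |` (V ` deps \<Phi> e) = \<tau> |` (V ` deps \<Phi> e)"
        proof
          fix y show "(\<tau>' |` (V ` deps \<Phi> e)) y = (\<tau> |` (V ` deps \<Phi> e)) y"
          proof (cases "y \<in> V ` deps \<Phi> e \<and> y \<in> V ` univs \<Phi> \<and> y \<in> dom \<sigma>")
            case True
            then obtain c where c: "\<sigma> y = Some c" by auto
            then have "ext \<tau> y = c" using ST True unfolding sat_term_def by auto
            then have "the (\<tau> y) = c" using True unfolding ext by auto
            moreover have "\<tau> y \<noteq> None" using t True unfolding assignments_def by auto
            ultimately show ?thesis using True c by (auto simp: \<tau>'_def)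
          next
            case False
            then show ?thesis by (auto simp: \<tau>'_def restrict_map_def)
          qed
        qed
        moreover have "V e \<notin> V ` univs \<Phi>" using e UE by auto
        ultimately show ?thesis using e unfolding ext by auto
      qed
      then show ?thesis unfolding C sat_clause_insert_neg by auto
    qed
    have "take (Suc i) Cs = take i Cs @ [Cs ! i]" using il by (simp add: take_Suc_conv_app_nth)
    then show ?case using IH new unfolding sat_cnf_def by auto
  qed
  from this[of "length Cs"]
  have "is_model (extend_prefix \<Phi> A (\<psi>0 \<union> set Cs)) G"
    unfolding is_model_def ext_def by (simp add: extend_prefix_def)
  then show "dqbf_true (extend_prefix \<Phi> A (lift_cnf (matrix \<Phi>) \<union> arbiter_clauses A \<union> set Cs))"
    unfolding dqbf_true_def \<psi>0_def by blast
qed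

end
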